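(* Let $Q$ be an absolutely continuous stochastic algorithm with Hamiltonian $H$, and suppose that for all $k\in[n]$, $h\in\mathcal{H}$, $y,y'\in\mathcal{X}$ and $\mathbf{x}\in\mathcal{X}^n$ we have $D^k_{y,y'}H(h,\mathbf{x})\le c$ and $h(y)\in[0,b]$. Then: (i) For any $\lambda>0$, $$\ln \mathbb{E}_{\mathbf{X}\sim\mu^n}\mathbb{E}_{h\sim Q_{\mathbf{X}}}\left[e^{\lambda\Delta(h,\mathbf{X})}\right]\le\sup_{h\in\mathcal{H}}\psi_{\lambda\Delta}(h)\le \frac{n}{8}\left(\frac{\lambda b}{n}+2c\right)^2.$$ (ii) For $\delta>0$, with probability at least $1-\delta$ as $\mathbf{X}\sim\mu^n$ and $h\sim Q_{\mathbf{X}}$, $$\Delta(h,\mathbf{X})\le b\left(c+\sqrt{\frac{\ln(1/\delta)}{2n}}\right).$$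
   Context: $\mathcal{X}$ is a measurable space with probability measure $\mu$, $\mathbf{X}=(X_1,\dots,X_n)\sim\mu^n$, $X\sim\mu$, and primes denote independent copies. $\mathcal{H}$ is a measurable space of measurable functions $h:\mathcal{X}\to[0,\infty)$ with nonnegative a-priori measure $\pi$. A stochastic algorithm $Q:\mathbf{x}\mapsto Q_{\mathbf{x}}$ (probability measures on $\mathcal{H}$) is absolutely continuous if each $Q_{\mathbf{x}}$ and $\pi$ are mutually absolutely continuous. A measurable $H:\mathcal{H}\times\mathcal{X}^n\to\mathbb{R}$ is a Hamiltonian for $Q$ if $dQ_{\mathbf{x}}(h)=e^{H(h,\mathbf{x})}d\pi(h)/Z(\mathbf{x})$ with $Z(\mathbf{x})=\int_{\mathcal{H}}e^{H(h,\mathbf{x})}d\pi(h)$; the canonical Hamiltonian is $H_Q=H-\ln Z=\ln(dQ_{\mathbf{x}}/d\pi)$. Generalization gap: $\Delta(h,\mathbf{x})=\mathbb{E}[h(X)]-\frac1n\sum_{i=1}^n h(x_i)$. For $F:\mathcal{H}\times\mathcal{X}^n\to\mathbb{R}$, $\psi_F(h)=\ln\mathbb{E}\left[\exp\left(F(h,\mathbf{X})+H_Q(h,\mathbf{X})-\mathbb{E}[H_Q(h,\mathbf{X}')]\right)\right]$. $S^k_y\mathbf{x}$ replaces the $k$-th coordinate of $\mathbf{x}$ by $y$; $D^k_{y,y'}G(h,\mathbf{x})=G(h,S^k_y\mathbf{x})-G(h,S^k_{y'}\mathbf{x})$. Probability "as $\mathbf{X}\sim\mu^n$ and $h\sim Q_{\mathbf{X}}$"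 is w.r.t. the joint law. All functions are assumed to have finite exponential moments of all orders. *)

theory Defs
  imports "HOL-Probability.Probability"
begin

text \<open>Samples \<open>x \<in> X^n\<close> are elements of \<open>PiM {..<n} (\<lambda>_. M)\<close>, i.e. functions on \<open>{..<n}\<close>
  (coordinates indexed \<open>0..n-1\<close>). Hypotheses are real-valued functions on the sample type;
  the hypothesis space is the measure \<open>\<pi>\<close> (its space, sigma-algebra and a-priori measure).\<close>

definition sample_space :: "nat \<Rightarrow> 'x measure \<Rightarrow> (nat \<Rightarrow> 'x) measure" where
  "sample_space n M = PiM {..<n} (\<lambda>_. M)"

definition gen_gap :: "'x measure \<Rightarrow> nat \<Rightarrow> ('x \<Rightarrow> real) \<Rightarrow> (nat \<Rightarrow> 'x) \<Rightarrow> real" where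
  "gen_gap M n h x = (\<integral>y. h y \<partial>M) - (\<Sum>i<n. h (x i)) / real n"

definition subst_coord :: "nat \<Rightarrow> 'x \<Rightarrow> (nat \<Rightarrow> 'x) \<Rightarrow> (nat \<Rightarrow> 'x)" where
  "subst_coord k y x = x(k := y)"

definition diff_op :: "nat \<Rightarrow> 'x \<Rightarrow> 'x \<Rightarrow> ('h \<Rightarrow> (nat \<Rightarrow> 'x) \<Rightarrow> real) \<Rightarrow> 'h \<Rightarrow> (nat \<Rightarrow> 'x) \<Rightarrow> real" where
  "diff_op k y y' G h x = G h (subst_coord k y x) - G h (subst_coord k y' x)"

definition abs_cont_algorithm ::
  "('h measure) \<Rightarrow> ('s measure) \<Rightarrow> ('s \<Rightarrow> 'h measure) \<Rightarrow> bool" where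
  "abs_cont_algorithm \<pi> S Q \<longleftrightarrow>
     Q \<in> measurable S (subprob_algebra \<pi>) \<and>
     (\<forall>x\<in>space S. prob_space (Q x) \<and> sets (Q x) = sets \<pi> \<and>
        absolutely_continuous \<pi> (Q x) \<and> absolutely_continuous (Q x) \<pi>)"

definition partition_fn :: "('h measure) \<Rightarrow> ('h \<Rightarrow> 's \<Rightarrow> real) \<Rightarrow> 's \<Rightarrow> ennreal" where
  "partition_fn \<pi> H x = (\<integral>\<^sup>+ h. ennreal (exp (H h x)) \<partial>\<pi>)"

definition is_hamiltonian ::
  "('h measure) \<Rightarrow> ('s measure) \<Rightarrow> ('s \<Rightarrow> 'h measure) \<Rightarrow> ('h \<Rightarrow> 's \<Rightarrow> real) \<Rightarrow> bool" where
  "is_hamiltonian \<pi> S Q H \<longleftrightarrow>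
     (\<lambda>(h, x). H h x) \<in> borel_measurable (\<pi> \<Otimes>\<^sub>M S) \<and>
     (\<forall>x\<in>space S. Q x = density \<pi> (\<lambda>h. ennreal (exp (H h x)) / partition_fn \<pi> H x))"

definition canon_hamiltonian :: "('h measure) \<Rightarrow> ('h \<Rightarrow> 's \<Rightarrow> real) \<Rightarrow> 'h \<Rightarrow> 's \<Rightarrow> real" where
  "canon_hamiltonian \<pi> H h x = H h x - ln (enn2real (partition_fn \<pi> H x))"

definition psi :: "('h measure) \<Rightarrow> ('s measure) \<Rightarrow> ('h \<Rightarrow> 's \<Rightarrow> real) \<Rightarrow> ('h \<Rightarrow> 's \<Rightarrow> real) \<Rightarrow> 'h \<Rightarrow> real" where
  "psi \<pi> S H F h = ln (\<integral>x. exp (F h x + canon_hamiltonian \<pi> H h x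
        - (\<integral>x'. canon_hamiltonian \<pi> H h x' \<partial>S)) \<partial>S)"

end

theory Submission imports Defs begin


lemma bnd_integrable:
  fixes f :: "'a \<Rightarrow> real"
  assumes "finite_measure M" "f \<in> borel_measurable M" "\<And>x. x \<in> space M \<Longrightarrow> \<bar>f x\<bar> \<le> B"
  shows "integrable M f"
  by (rule finite_measure.integrable_const_bound[where B=B]) (use assms in auto)

lemma osc_lemma:
  fixes G :: "('i \<Rightarrow> 'x) \<Rightarrow> real"
  assumes fin: "finite J"
    and Gd: "\<forall>k\<in>I. \<forall>x\<in>space (PiM I (\<lambda>_. M)). \<forall>y\<in>space M. \<forall>y'\<in>space M. G (x(k:=y)) - G (x(k:=y')) \<le> d"
  shows "J \<subseteq> I \<Longrightarrow> x \<in> space (PiM I (\<lambda>_. M)) \<Longrightarrow> x' \<in> space (PiM I (\<lambda>_. M))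
    \<Longrightarrow> (\<forall>j\<in>I - J. x j = x' j) \<Longrightarrow> G x - G x' \<le> real (card J) * d"
  using fin
proof (induction J arbitrary: x' rule: finite_induct)
  case empty
  have "x = x'"
  proof
    fix j show "x j = x' j"
      using empty(2,3,4) by (cases "j \<in> I") (auto simp: space_PiM PiE_def extensional_def)
  qed
  then show ?case by simp
next
  case (insert j J)
  define x'' where "x'' = x'(j := x j)"
  have jI: "j \<in> I" using insert by auto
  have xj: "x j \<in> space M" "x' j \<in> space M" using insert(5,6) jI by (auto simp: space_PiM)
  have x''s: "x'' \<in> space (PiM I (\<lambda>_. M))"
    using insert(6) xj jI unfolding x''_def by (auto simp: space_PiM PiE_def extensional_def)
  have agree: "\<forall>k\<in>I - J. x k = x'' k"
    using insert(7) unfolding x''_def by auto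
  have "G x - G x'' \<le> real (card J) * d"
    using insert(3)[OF _ insert(5) x''s agree] insert(4) by auto
  moreover have "G x'' - G x' \<le> d"
    using Gd jI insert(6) xj unfolding x''_def
    by (metis fun_upd_triv)
  ultimately show ?case using insert(1,2) by (simp add: algebra_simps)
qed

lemma osc_bound:
  fixes G :: "('i \<Rightarrow> 'x) \<Rightarrow> real"
  assumes fin: "finite I"
    and Gd: "\<forall>k\<in>I. \<forall>x\<in>space (PiM I (\<lambda>_. M)). \<forall>y\<in>space M. \<forall>y'\<in>space M. G (x(k:=y)) - G (x(k:=y')) \<le> d"
    and "x \<in> space (PiM I (\<lambda>_. M))" "x' \<in> space (PiM I (\<lambda>_. M))"
  shows "G x - G x' \<le> real (card I) * d"
  using osc_lemma[OF fin Gd, of x x'] assms by auto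




lemma exp_bnd: "\<bar>a::real\<bar> \<le> B \<Longrightarrow> \<bar>exp (a - E)\<bar> \<le> exp (B + \<bar>E\<bar>)"
  by simp

lemma mcdiarmid:
  fixes M :: "'x measure" and G :: "('i \<Rightarrow> 'x) \<Rightarrow> real"
  assumes M: "prob_space M" and fin: "finite I"
  shows "G \<in> borel_measurable (PiM I (\<lambda>_. M)) \<Longrightarrow>
    (\<forall>x\<in>space (PiM I (\<lambda>_. M)). \<bar>G x\<bar> \<le> B) \<Longrightarrow>
    (\<forall>k\<in>I. \<forall>x\<in>space (PiM I (\<lambda>_. M)). \<forall>y\<in>space M. \<forall>y'\<in>space M. G (x(k:=y)) - G (x(k:=y')) \<le> d) \<Longrightarrow>
    (\<integral>x. exp (G x - (\<integral>x. G x \<partial>PiM I (\<lambda>_. M))) \<partial>PiM I (\<lambda>_. M)) \<le> exp (real (card I) * d^2 / 8)"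
  using fin
proof (induction I arbitrary: G B rule: finite_induct)
  case empty
  show ?case by (simp add: PiM_empty lebesgue_integral_count_space_finite)
next
  case (insert i I G B)
  interpret PP: product_prob_space "\<lambda>_. M" UNIV
    by (intro product_prob_space.intro product_sigma_finite.intro product_prob_space_axioms.intro)
       (auto simp: M prob_space_imp_sigma_finite)
  have MF: "finite_measure M" using M by (simp add: prob_space_def)
  have Mps: "measure M (space M) = 1" using M by (rule prob_space.prob_space)
  note MBL = sigma_finite_measure.borel_measurable_lebesgue_integral[OF prob_space_imp_sigma_finite[OF M]]
  let ?P = "PiM I (\<lambda>_. M)" and ?P' = "PiM (insert i I) (\<lambda>_. M)"
  interpret P: prob_space ?P by (rule prob_space_PiM) (simp add: M)
  interpret P': prob_space ?P' by (rule prob_space_PiM) (simp add: M)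
  note Gm[measurable] = insert(4)
  have upd_m[measurable]: "(\<lambda>(x, y). x(i := y)) \<in> measurable (?P \<Otimes>\<^sub>M M) ?P'"
    using measurable_fun_upd[where I="insert i I" and J=I and i=i and M="\<lambda>_. M" and N="?P \<Otimes>\<^sub>M M"
        and f=fst and h=snd]
    by (simp add: split_beta' measurable_fst'' measurable_snd'')
  have Gu[measurable]: "(\<lambda>(x, y). G (x(i := y))) \<in> borel_measurable (?P \<Otimes>\<^sub>M M)"
    using measurable_comp[OF upd_m Gm] by (simp add: comp_def split_beta')
  have sp: "x(i := y) \<in> space ?P'" if "x \<in> space ?P" "y \<in> space M" for x y
    using that by (auto simp: space_PiM PiE_def extensional_def)
  have Gxb: "\<bar>G (x(i := y))\<bar> \<le> B" if "x \<in> space ?P" "y \<in> space M" for x y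
    using insert(5) sp[OF that] by blast
  have Gsec: "(\<lambda>y. G (x(i := y))) \<in> borel_measurable M" if x: "x \<in> space ?P" for x
  proof -
    have "(\<lambda>y. x(i := y)) \<in> measurable M ?P'"
      using measurable_fun_upd[where I="insert i I" and J=I and i=i and M="\<lambda>_. M" and N=M
        and f="\<lambda>_. x" and h="\<lambda>y. y"] x by simp
    from measurable_comp[OF this Gm] show ?thesis by (simp add: comp_def)
  qed
  have eS: "integrable M (\<lambda>y. exp (G (x(i:=y)) - E))" if x: "x \<in> space ?P" for x E
  proof (rule bnd_integrable[where B="exp (B + \<bar>E\<bar>)", OF MF])
    show "(\<lambda>y. exp (G (x(i:=y)) - E)) \<in> borel_measurable M" by (rule measurable_compose[OF Gsec[OF x]]) measurable
    fix y assume "y \<in> space M"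
    from exp_bnd[OF Gxb[OF x this]] show "\<bar>exp (G (x(i:=y)) - E)\<bar> \<le> exp (B + \<bar>E\<bar>)" .
  qed
  define G1 where "G1 x = (\<integral>y. G (x(i := y)) \<partial>M)" for x
  have G1m[measurable]: "G1 \<in> borel_measurable ?P"
    unfolding G1_def by (rule MBL) (use Gu in simp)
  have Gi: "integrable M (\<lambda>y. G (x(i := y)))" if "x \<in> space ?P" for x
    by (rule bnd_integrable[where B=B]) (use insert(5) sp that in \<open>auto intro: MF\<close>)
  have G1b: "\<forall>x\<in>space ?P. \<bar>G1 x\<bar> \<le> B"
  proof
    fix x assume x: "x \<in> space ?P"
    have "\<bar>G1 x\<bar> \<le> (\<integral>y. \<bar>G (x(i := y))\<bar> \<partial>M)"
      unfolding G1_def by (rule integral_abs_bound)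
    also have "\<dots> \<le> (\<integral>y. B \<partial>M)"
      by (intro integral_mono integrable_abs Gi x) (use insert(5) sp x in auto)
    finally show "\<bar>G1 x\<bar> \<le> B" by (simp add: Mps)
  qed
  have G1d: "\<forall>k\<in>I. \<forall>x\<in>space ?P. \<forall>y\<in>space M. \<forall>y'\<in>space M. G1 (x(k:=y)) - G1 (x(k:=y')) \<le> d"
  proof (intro ballI)
    fix k x y y' assume k: "k \<in> I" and x: "x \<in> space ?P" and y: "y \<in> space M" and y': "y' \<in> space M"
    have ki: "k \<noteq> i" using k insert(2) by auto
    have xk: "x(k := y) \<in> space ?P" "x(k := y') \<in> space ?P"
      using x y y' k by (auto simp: space_PiM PiE_def extensional_def)
    have "G1 (x(k:=y)) = (\<integral>z. G ((x(i:=z))(k := y)) \<partial>M)"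
      unfolding G1_def using ki by (simp add: fun_upd_twist)
    also have "\<dots> \<le> (\<integral>z. G ((x(i:=z))(k := y')) + d \<partial>M)"
    proof (rule integral_mono)
      show "integrable M (\<lambda>z. G ((x(i:=z))(k := y)))"
        using Gi[OF xk(1)] ki by (simp add: fun_upd_twist)
      show "integrable M (\<lambda>z. G ((x(i:=z))(k := y')) + d)"
        using Gi[OF xk(2)] ki by (simp add: fun_upd_twist)
      fix z assume z: "z \<in> space M"
      show "G ((x(i:=z))(k := y)) \<le> G ((x(i:=z))(k := y')) + d"
        using insert(6)[rule_format, of k "x(i:=z)" y y'] k sp[OF x z] y y' by simp
    qed
    also have "\<dots> = G1 (x(k:=y')) + d"
      unfolding G1_def using ki Gi[OF xk(2)] by (simp add: fun_upd_twist Mps)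
    finally show "G1 (x(k:=y)) - G1 (x(k:=y')) \<le> d" by simp
  qed
  have IH: "(\<integral>x. exp (G1 x - (\<integral>x. G1 x \<partial>?P)) \<partial>?P) \<le> exp (real (card I) * d^2 / 8)"
    by (rule insert(3)[OF G1m G1b G1d])
  have GI: "integrable ?P' G"
    by (rule bnd_integrable[where B=B]) (use insert(5) in \<open>auto intro: P'.finite_measure_axioms\<close>)
  define EG where "EG = (\<integral>x. G x \<partial>?P')"
  have EG: "EG = (\<integral>x. G1 x \<partial>?P)"
    unfolding EG_def G1_def by (rule PP.product_integral_insert[OF insert(1,2) GI])
  have eI: "integrable ?P' (\<lambda>x. exp (G x - EG))"
  proof (rule bnd_integrable[where B="exp (B + \<bar>EG\<bar>)", OF P'.finite_measure_axioms])
    show "(\<lambda>x. exp (G x - EG)) \<in> borel_measurable ?P'" by measurable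
    fix x assume "x \<in> space ?P'"
    with insert(5) have "\<bar>G x\<bar> \<le> B" by blast
    from exp_bnd[OF this] show "\<bar>exp (G x - EG)\<bar> \<le> exp (B + \<bar>EG\<bar>)" .
  qed
  have "(\<integral>x. exp (G x - EG) \<partial>?P') = (\<integral>x. (\<integral>y. exp (G (x(i:=y)) - EG) \<partial>M) \<partial>?P)"
    by (rule PP.product_integral_insert[OF insert(1,2) eI])
  also have "\<dots> \<le> (\<integral>x. exp (G1 x - EG) * exp (d^2/8) \<partial>?P)"
  proof (rule integral_mono)
    show "integrable ?P (\<lambda>x. \<integral>y. exp (G (x(i:=y)) - EG) \<partial>M)"
    proof (rule bnd_integrable[where B="exp (B + \<bar>EG\<bar>)"])
      show "finite_measure ?P" by (rule P.finite_measure_axioms)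
      show "(\<lambda>x. \<integral>y. exp (G (x(i:=y)) - EG) \<partial>M) \<in> borel_measurable ?P"
        by (rule MBL) (use Gu in simp)
      fix x assume x: "x \<in> space ?P"
      have "\<bar>\<integral>y. exp (G (x(i:=y)) - EG) \<partial>M\<bar> = (\<integral>y. exp (G (x(i:=y)) - EG) \<partial>M)"
        by (simp add: integral_nonneg)
      also have "\<dots> \<le> (\<integral>y. exp (B + \<bar>EG\<bar>) \<partial>M)"
      proof (rule integral_mono[OF eS[OF x] finite_measure.integrable_const[OF MF]])
        fix y assume "y \<in> space M"
        from exp_bnd[OF Gxb[OF x this], of EG] show "exp (G (x(i:=y)) - EG) \<le> exp (B + \<bar>EG\<bar>)" by simp
      qed
      finally show "\<bar>\<integral>y. exp (G (x(i:=y)) - EG) \<partial>M\<bar> \<le> exp (B + \<bar>EG\<bar>)" by (simp add: Mps)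
    qed
    show "integrable ?P (\<lambda>x. exp (G1 x - EG) * exp (d^2/8))"
    proof (rule bnd_integrable[where B="exp (B + \<bar>EG\<bar>) * exp (d^2/8)", OF P.finite_measure_axioms])
      show "(\<lambda>x. exp (G1 x - EG) * exp (d^2/8)) \<in> borel_measurable ?P" by measurable
      fix x assume "x \<in> space ?P"
      with G1b have "\<bar>G1 x\<bar> \<le> B" by blast
      from exp_bnd[OF this, of EG] show "\<bar>exp (G1 x - EG) * exp (d^2/8)\<bar> \<le> exp (B + \<bar>EG\<bar>) * exp (d^2/8)"
        by (simp add: abs_mult)
    qed
    fix x assume x: "x \<in> space ?P"
    define f where "f y = G (x(i:=y))" for y
    define a where "a = (INF y\<in>space M. f y)"
    have fb: "\<bar>f y\<bar> \<le> B" if "y \<in> space M" for y using Gxb[OF x that] f_def by simp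
    have bdd: "bdd_below (f ` space M)" using fb by (intro bdd_belowI[where m="-B"]) fastforce
    have ne: "space M \<noteq> {}" using prob_space.not_empty[OF M] .
    have fd: "f y - f y' \<le> d" if "y \<in> space M" "y' \<in> space M" for y y'
      using insert(6)[rule_format, of i "x(i:=y)" y y'] that sp[OF x that(1)] unfolding f_def
      by simp
    have int: "f y \<in> {a..a + d}" if y: "y \<in> space M" for y
    proof -
      have "a \<le> f y" unfolding a_def using bdd y by (simp add: cINF_lower)
      moreover have "f y - d \<le> a" unfolding a_def
      proof (intro cINF_greatest ne)
        fix y' assume "y' \<in> space M"
        from fd[OF y this] show "f y - d \<le> f y'" by linarith
      qed
      ultimately show ?thesis by simp
    qed
    interpret HB: interval_bounded_random_variable M f a "a + d"
    proof unfold_locales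
      show "f \<in> borel_measurable M" using Gsec[OF x] unfolding f_def .
      show "AE y in M. f y \<in> {a..a + d}" using int by (intro AE_I2) 
    qed
    have fI: "integrable M f" using Gi[OF x] unfolding f_def .
    have h: "(\<integral>\<^sup>+y. exp (1 * (f y - (\<integral>y. f y \<partial>M))) \<partial>M) \<le> ennreal (exp (1\<^sup>2 * (a + d - a)\<^sup>2 / 8))"
      by (rule HB.Hoeffdings_lemma_nn_integral) simp
    have eI2: "integrable M (\<lambda>y. exp (f y - G1 x))"
    proof (rule bnd_integrable[where B="exp (B + \<bar>G1 x\<bar>)", OF MF])
      show "(\<lambda>y. exp (f y - G1 x)) \<in> borel_measurable M"
        unfolding f_def by (rule measurable_compose[OF Gsec[OF x]]) measurable
      fix y assume "y \<in> space M"
      from exp_bnd[OF fb[OF this], of "G1 x"] show "\<bar>exp (f y - G1 x)\<bar> \<le> exp (B + \<bar>G1 x\<bar>)" .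
    qed
    have "(\<integral>\<^sup>+y. exp (f y - G1 x) \<partial>M) = ennreal (\<integral>y. exp (f y - G1 x) \<partial>M)"
      by (rule nn_integral_eq_integral[OF eI2]) auto
    moreover have "G1 x = (\<integral>y. f y \<partial>M)" unfolding G1_def f_def ..
    ultimately have "ennreal (\<integral>y. exp (f y - G1 x) \<partial>M) \<le> ennreal (exp (d^2/8))"
      using h by simp
    hence hb: "(\<integral>y. exp (f y - G1 x) \<partial>M) \<le> exp (d^2/8)"
      by (simp add: ennreal_le_iff)
    have "(\<integral>y. exp (G (x(i:=y)) - EG) \<partial>M) = (\<integral>y. exp (G1 x - EG) * exp (f y - G1 x) \<partial>M)"
      by (simp add: f_def flip: exp_add)
    also have "\<dots> = exp (G1 x - EG) * (\<integral>y. exp (f y - G1 x) \<partial>M)" by simp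
    also have "\<dots> \<le> exp (G1 x - EG) * exp (d^2/8)"
      using hb by (intro mult_left_mono) auto
    finally show "(\<integral>y. exp (G (x(i:=y)) - EG) \<partial>M) \<le> exp (G1 x - EG) * exp (d^2/8)" .
  qed
  also have "\<dots> = (\<integral>x. exp (G1 x - (\<integral>x. G1 x \<partial>?P)) \<partial>?P) * exp (d^2/8)"
    by (simp add: EG)
  also have "\<dots> \<le> exp (real (card I) * d^2 / 8) * exp (d^2/8)"
    using IH by (intro mult_right_mono) auto
  also have "\<dots> = exp (real (card (insert i I)) * d^2 / 8)"
    using insert(1,2) by (simp add: flip: exp_add) (simp add: field_simps)
  finally show ?case unfolding EG_def .
qed




lemma ennreal_mult_inverse_one:
  fixes Z :: ennreal
  assumes "Z * inverse Z = 1"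
  shows "0 < Z \<and> Z < top"
proof -
  have "Z \<noteq> 0" using assms by auto
  moreover have "Z \<noteq> top" using assms by auto
  moreover have "Z < top" using \<open>Z \<noteq> top\<close> less_top by blast
  ultimately show ?thesis by (simp add: zero_less_iff_neq_zero)
qed

locale setting =
  fixes M :: "'x measure" and \<pi> :: "('x \<Rightarrow> real) measure"
    and Q :: "(nat \<Rightarrow> 'x) \<Rightarrow> ('x \<Rightarrow> real) measure"
    and H :: "('x \<Rightarrow> real) \<Rightarrow> (nat \<Rightarrow> 'x) \<Rightarrow> real"
    and n :: nat and b c :: real
  assumes M: "prob_space M"
    and npos: "n > 0"
    and hm: "(\<lambda>(h, y). h y) \<in> borel_measurable (\<pi> \<Otimes>\<^sub>M M)"
    and ac: "abs_cont_algorithm \<pi> (sample_space n M) Q"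
    and ham: "is_hamiltonian \<pi> (sample_space n M) Q H"
    and Hd: "\<forall>k<n. \<forall>h\<in>space \<pi>. \<forall>y\<in>space M. \<forall>y'\<in>space M. \<forall>x\<in>space (sample_space n M).
           diff_op k y y' H h x \<le> c"
    and hb: "\<forall>h\<in>space \<pi>. \<forall>y\<in>space M. 0 \<le> h y \<and> h y \<le> b"
begin

abbreviation "S \<equiv> sample_space n M"
abbreviation "Z \<equiv> partition_fn \<pi> H"
abbreviation "HQ \<equiv> canon_hamiltonian \<pi> H"

lemma S_eq: "S = PiM {..<n} (\<lambda>_. M)" by (simp add: sample_space_def)

lemma S_ps: "prob_space S"
  unfolding S_eq by (rule prob_space_PiM) (simp add: M)

lemma Q_props: "x \<in> space S \<Longrightarrow> prob_space (Q x) \<and> sets (Q x) = sets \<pi>"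
  using ac unfolding abs_cont_algorithm_def by blast

lemma Q_space: assumes x: "x \<in> space S" shows "space (Q x) = space \<pi>"
  using Q_props[OF x] by (intro sets_eq_imp_space_eq) blast

lemma Qm: "Q \<in> measurable S (subprob_algebra \<pi>)"
  using ac unfolding abs_cont_algorithm_def by blast

lemma Hm[measurable]: "(\<lambda>(h, x). H h x) \<in> borel_measurable (\<pi> \<Otimes>\<^sub>M S)"
  using ham unfolding is_hamiltonian_def by blast

lemma Qdens: "x \<in> space S \<Longrightarrow> Q x = density \<pi> (\<lambda>h. ennreal (exp (H h x)) / Z x)"
  using ham unfolding is_hamiltonian_def by blast

lemma Hsec: assumes x: "x \<in> space S" shows "(\<lambda>h. H h x) \<in> borel_measurable \<pi>"
  using measurable_comp[OF measurable_Pair2'[OF x] Hm] by (simp add: comp_def)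

lemma Hsec2: "h \<in> space \<pi> \<Longrightarrow> (\<lambda>x. H h x) \<in> borel_measurable S"
  using measurable_Pair2[OF Hm, of h] by simp

lemma S_ne: "space S \<noteq> {}"
  using prob_space.not_empty[OF S_ps] .

lemma pi_ne: "space \<pi> \<noteq> {}"
proof -
  obtain x where x: "x \<in> space S" using S_ne by blast
  show ?thesis using prob_space.not_empty[of "Q x"] Q_props[OF x] Q_space[OF x] by auto
qed

lemma Z_fin: assumes x: "x \<in> space S" shows "0 < Z x \<and> Z x < top"
proof -
  have "1 = emeasure (Q x) (space (Q x))"
    using Q_props[OF x] by (simp add: prob_space.emeasure_space_1)
  also have "\<dots> = emeasure (density \<pi> (\<lambda>h. ennreal (exp (H h x)) / Z x)) (space \<pi>)"
    using Qdens[OF x] Q_space[OF x] by simp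
  also have "\<dots> = (\<integral>\<^sup>+h. ennreal (exp (H h x)) / Z x * indicator (space \<pi>) h \<partial>\<pi>)"
    by (rule emeasure_density) (use Hsec[OF x] in measurable)
  also have "\<dots> = (\<integral>\<^sup>+h. ennreal (exp (H h x)) * inverse (Z x) \<partial>\<pi>)"
    by (intro nn_integral_cong) (simp add: divide_ennreal_def)
  also have "\<dots> = Z x * inverse (Z x)"
    unfolding partition_fn_def by (rule nn_integral_multc) (use Hsec[OF x] in measurable)
  finally have "Z x * inverse (Z x) = 1" by (rule sym)
  from ennreal_mult_inverse_one[OF this] show ?thesis .
qed

definition Zr where "Zr x = enn2real (Z x)"

lemma Zr_pos: "x \<in> space S \<Longrightarrow> 0 < Zr x"
  using Z_fin unfolding Zr_def by (simp add: enn2real_positive_iff)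

lemma Z_eq: assumes x: "x \<in> space S" shows "Z x = ennreal (Zr x)"
  using Z_fin[OF x] unfolding Zr_def by simp

lemma HQ_eq: "HQ h x = H h x - ln (Zr x)"
  unfolding canon_hamiltonian_def Zr_def by simp

lemma pi_sf: "sigma_finite_measure \<pi>"
proof
  obtain x0 where x0: "x0 \<in> space S" using S_ne by blast
  define A where "A k = {h \<in> space \<pi>. 1 / real (Suc k) \<le> exp (H h x0)}" for k
  have Am: "A k \<in> sets \<pi>" for k unfolding A_def using Hsec[OF x0] by measurable
  have Afin: "emeasure \<pi> (A k) \<noteq> \<infinity>" for k
  proof -
    have "ennreal (1 / real (Suc k)) * emeasure \<pi> (A k) = (\<integral>\<^sup>+h. ennreal (1 / real (Suc k)) * indicator (A k) h \<partial>\<pi>)"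
      by (rule nn_integral_cmult_indicator[symmetric, OF Am])
    also have "\<dots> \<le> (\<integral>\<^sup>+h. ennreal (exp (H h x0)) \<partial>\<pi>)"
      by (intro nn_integral_mono) (auto simp: A_def indicator_def intro!: ennreal_leI)
    also have "\<dots> < top" using Z_fin[OF x0] unfolding partition_fn_def by simp
    finally have "ennreal (1 / real (Suc k)) * emeasure \<pi> (A k) < top" .
    moreover have "ennreal (1 / real (Suc k)) \<noteq> 0" by simp
    ultimately have "emeasure \<pi> (A k) = 0 \<or> emeasure \<pi> (A k) < top"
      unfolding ennreal_mult_less_top by simp
    then show ?thesis by (elim disjE) simp_all
  qed
  have "(\<Union>k. A k) = space \<pi>"
  proof safe
    fix h assume h: "h \<in> space \<pi>"
    obtain k where "inverse (real (Suc k)) < exp (H h x0)"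
      using reals_Archimedean[of "exp (H h x0)"] by auto
    then have "h \<in> A k" using h by (auto simp: A_def field_simps)
    then show "h \<in> (\<Union>k. A k)" by blast
  qed (auto simp: A_def)
  then show "\<exists>A::('x \<Rightarrow> real) set set. countable A \<and> A \<subseteq> sets \<pi> \<and> \<Union>A = space \<pi> \<and> (\<forall>a\<in>A. emeasure \<pi> a \<noteq> \<infinity>)"
  proof (intro exI[of _ "range A"] conjI)
    show "range A \<subseteq> sets \<pi>" using Am by blast
    show "\<forall>a\<in>range A. emeasure \<pi> a \<noteq> \<infinity>" using Afin by blast
  qed simp_all
qed

lemma Zm[measurable]: "Z \<in> borel_measurable S"
proof -
  have sw: "(\<lambda>(x, h). H h x) \<in> borel_measurable (S \<Otimes>\<^sub>M \<pi>)"
    using measurable_comp[OF measurable_pair_swap'[of S \<pi>] Hm] by (simp add: comp_def split_beta')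
  show ?thesis
    unfolding partition_fn_def[abs_def]
    by (rule sigma_finite_measure.borel_measurable_nn_integral[OF pi_sf]) (use sw in measurable)
qed

lemma Zrm[measurable]: "Zr \<in> borel_measurable S"
  unfolding Zr_def[abs_def] by measurable

lemma HQm[measurable]: "(\<lambda>(h, x). HQ h x) \<in> borel_measurable (\<pi> \<Otimes>\<^sub>M S)"
  unfolding HQ_eq by measurable

lemma HQsec: assumes x: "x \<in> space S" shows "(\<lambda>h. HQ h x) \<in> borel_measurable \<pi>"
  unfolding HQ_eq using Hsec[OF x] by measurable

lemma HQsec2: assumes h: "h \<in> space \<pi>" shows "(\<lambda>x. HQ h x) \<in> borel_measurable S"
  using measurable_Pair2[OF HQm, of h] h by simp

lemma dens_HQ: assumes x: "x \<in> space S"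
  shows "Q x = density \<pi> (\<lambda>h. ennreal (exp (HQ h x)))"
proof -
  have "ennreal (exp (H h x)) / Z x = ennreal (exp (HQ h x))" for h
    using Zr_pos[OF x] Z_eq[OF x]
    by (simp add: HQ_eq divide_ennreal exp_diff)
  then show ?thesis using Qdens[OF x] by simp
qed

lemma int_HQ: assumes x: "x \<in> space S"
  shows "(\<integral>\<^sup>+h. ennreal (exp (HQ h x)) \<partial>\<pi>) = 1"
proof -
  have "1 = emeasure (Q x) (space (Q x))"
    using Q_props[OF x] by (simp add: prob_space.emeasure_space_1)
  also have "\<dots> = emeasure (density \<pi> (\<lambda>h. ennreal (exp (HQ h x)))) (space \<pi>)"
    using dens_HQ[OF x] Q_space[OF x] by simp
  also have "\<dots> = (\<integral>\<^sup>+h. ennreal (exp (HQ h x)) * indicator (space \<pi>) h \<partial>\<pi>)"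
    by (rule emeasure_density) (use HQsec[OF x] in measurable)
  also have "\<dots> = (\<integral>\<^sup>+h. ennreal (exp (HQ h x)) \<partial>\<pi>)"
    by (intro nn_integral_cong) simp
  finally show ?thesis by (rule sym)
qed

end



lemma exp_jensen:
  fixes f :: "'a \<Rightarrow> real"
  assumes P: "prob_space P" and fm: "f \<in> borel_measurable P" and fb: "\<And>x. x \<in> space P \<Longrightarrow> \<bar>f x\<bar> \<le> B"
  shows "1 \<le> (\<integral>x. exp (f x - (\<integral>x. f x \<partial>P)) \<partial>P)"
proof -
  have PF: "finite_measure P" using P by (simp add: prob_space_def)
  have fI: "integrable P f" by (rule bnd_integrable[OF PF fm fb])
  have eI: "integrable P (\<lambda>x. exp (f x - (\<integral>x. f x \<partial>P)))"
  proof (rule bnd_integrable[OF PF, where B="exp (B + \<bar>\<integral>x. f x \<partial>P\<bar>)"])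
    show "(\<lambda>x. exp (f x - (\<integral>x. f x \<partial>P))) \<in> borel_measurable P" using fm by measurable
    fix x assume "x \<in> space P"
    from exp_bnd[OF fb[OF this]] show "\<bar>exp (f x - (\<integral>x. f x \<partial>P))\<bar> \<le> exp (B + \<bar>\<integral>x. f x \<partial>P\<bar>)" .
  qed
  have c1: "integrable P (\<lambda>x. 1::real)" by (rule finite_measure.integrable_const[OF PF])
  have c2: "integrable P (\<lambda>x. (\<integral>x. f x \<partial>P))" by (rule finite_measure.integrable_const[OF PF])
  have "(\<integral>x. 1 + (f x - (\<integral>x. f x \<partial>P)) \<partial>P) = (\<integral>x. 1 \<partial>P) + (\<integral>x. (f x - (\<integral>x. f x \<partial>P)) \<partial>P)"
    by (rule Bochner_Integration.integral_add[OF c1 Bochner_Integration.integrable_diff[OF fI c2]])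
  also have "(\<integral>x. (f x - (\<integral>x. f x \<partial>P)) \<partial>P) = (\<integral>x. f x \<partial>P) - (\<integral>x. (\<integral>x. f x \<partial>P) \<partial>P)"
    by (rule Bochner_Integration.integral_diff[OF fI c2])
  finally have "(\<integral>x. 1 + (f x - (\<integral>x. f x \<partial>P)) \<partial>P) = 1"
    using prob_space.prob_space[OF P] by simp
  moreover have "(\<integral>x. 1 + (f x - (\<integral>x. f x \<partial>P)) \<partial>P) \<le> (\<integral>x. exp (f x - (\<integral>x. f x \<partial>P)) \<partial>P)"
    by (rule integral_mono[OF Bochner_Integration.integrable_add[OF c1 Bochner_Integration.integrable_diff[OF fI c2]] eI])
       (rule exp_ge_add_one_self)
  ultimately show ?thesis by simp
qed

context setting begin

lemma upd_space: "k < n \<Longrightarrow> x \<in> space S \<Longrightarrow> y \<in> space M \<Longrightarrow> x(k:=y) \<in> space S"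
  by (auto simp: S_eq space_PiM PiE_def extensional_def)

lemma x_comp: "x \<in> space S \<Longrightarrow> i < n \<Longrightarrow> x i \<in> space M"
  by (auto simp: S_eq space_PiM)

lemma Hd': "k < n \<Longrightarrow> h \<in> space \<pi> \<Longrightarrow> y \<in> space M \<Longrightarrow> y' \<in> space M \<Longrightarrow> x \<in> space S \<Longrightarrow>
  H h (x(k:=y)) - H h (x(k:=y')) \<le> c"
  using Hd unfolding diff_op_def subst_coord_def by blast

lemma Zr_diff:
  assumes k: "k < n" and x: "x \<in> space S" and y: "y \<in> space M" and y': "y' \<in> space M"
  shows "Zr (x(k:=y')) \<le> exp c * Zr (x(k:=y))"
proof -
  have xs1: "x(k:=y) \<in> space S" and xs2: "x(k:=y') \<in> space S" using upd_space k x y y' by auto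
  have "ennreal (Zr (x(k:=y'))) = Z (x(k:=y'))" using Z_eq[OF xs2] by simp
  also have "\<dots> \<le> (\<integral>\<^sup>+h. ennreal (exp c) * ennreal (exp (H h (x(k:=y)))) \<partial>\<pi>)"
    unfolding partition_fn_def
  proof (rule nn_integral_mono)
    fix h assume h: "h \<in> space \<pi>"
    have "H h (x(k:=y')) \<le> c + H h (x(k:=y))" using Hd'[OF k h y' y x] by simp
    then have "exp (H h (x(k:=y'))) \<le> exp c * exp (H h (x(k:=y)))" by (simp flip: exp_add)
    then show "ennreal (exp (H h (x(k:=y')))) \<le> ennreal (exp c) * ennreal (exp (H h (x(k:=y))))"
      by (simp add: ennreal_leI flip: ennreal_mult)
  qed
  also have "\<dots> = ennreal (exp c) * Z (x(k:=y))"
    unfolding partition_fn_def by (rule nn_integral_cmult) (use Hsec[OF xs1] in measurable)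
  also have "\<dots> = ennreal (exp c * Zr (x(k:=y)))" using Z_eq[OF xs1] Zr_pos[OF xs1] by (simp add: ennreal_mult)
  finally show ?thesis
    by (subst (asm) ennreal_le_iff) (use Zr_pos[OF xs1] in auto)
qed

lemma HQ_diff:
  assumes k: "k < n" and h: "h \<in> space \<pi>" and x: "x \<in> space S" and y: "y \<in> space M" and y': "y' \<in> space M"
  shows "HQ h (x(k:=y)) - HQ h (x(k:=y')) \<le> 2 * c"
proof -
  have xs1: "x(k:=y) \<in> space S" and xs2: "x(k:=y') \<in> space S" using upd_space k x y y' by auto
  have 1: "H h (x(k:=y)) - H h (x(k:=y')) \<le> c" by (rule Hd'[OF k h y y' x])
  have "ln (Zr (x(k:=y'))) \<le> ln (exp c * Zr (x(k:=y)))"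
    using Zr_diff[OF k x y y'] Zr_pos[OF xs1] Zr_pos[OF xs2] by simp
  also have "\<dots> = c + ln (Zr (x(k:=y)))" using Zr_pos[OF xs1] by (simp add: ln_mult)
  finally show ?thesis using 1 unfolding HQ_eq by linarith
qed

lemma HQ_diff_all: "h \<in> space \<pi> \<Longrightarrow> \<forall>k\<in>{..<n}. \<forall>x\<in>space (PiM {..<n} (\<lambda>_. M)). \<forall>y\<in>space M. \<forall>y'\<in>space M.
   HQ h (x(k:=y)) - HQ h (x(k:=y')) \<le> 2 * c"
  using HQ_diff unfolding S_eq by blast

lemma S_ne': obtains x0 where "x0 \<in> space S" using S_ne by blast

lemma HQ_bnd: assumes h: "h \<in> space \<pi>" shows "\<exists>B. \<forall>x\<in>space S. \<bar>HQ h x\<bar> \<le> B"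
proof -
  obtain x0 where x0: "x0 \<in> space S" using S_ne by blast
  have "\<bar>HQ h x\<bar> \<le> \<bar>HQ h x0\<bar> + real n * (2 * c)" if x: "x \<in> space S" for x
  proof -
    have "HQ h x - HQ h x0 \<le> real (card {..<n}) * (2 * c)"
      by (rule osc_bound[OF _ HQ_diff_all[OF h]]) (use x x0 in \<open>simp_all add: S_eq\<close>)
    moreover have "HQ h x0 - HQ h x \<le> real (card {..<n}) * (2 * c)"
      by (rule osc_bound[OF _ HQ_diff_all[OF h]]) (use x x0 in \<open>simp_all add: S_eq\<close>)
    ultimately show ?thesis by simp
  qed
  then show ?thesis by blast
qed

lemma hsecM: assumes h: "h \<in> space \<pi>" shows "h \<in> borel_measurable M"
  using measurable_Pair2[OF hm h] by simp

lemma hbnd: "h \<in> space \<pi> \<Longrightarrow> y \<in> space M \<Longrightarrow> 0 \<le> h y \<and> h y \<le> b"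
  using hb by blast

lemma M_ne: "space M \<noteq> {}" using prob_space.not_empty[OF M] .

lemma b_nonneg: "0 \<le> b"
proof -
  obtain h where h: "h \<in> space \<pi>" using pi_ne by blast
  obtain y where y: "y \<in> space M" using M_ne by blast
  show ?thesis using hbnd[OF h y] by linarith
qed

lemma c_nonneg: "0 \<le> c"
proof -
  obtain h where h: "h \<in> space \<pi>" using pi_ne by blast
  obtain y where y: "y \<in> space M" using M_ne by blast
  obtain x where x: "x \<in> space S" using S_ne by blast
  show ?thesis using Hd'[OF npos h y y x] by simp
qed

lemma MF: "finite_measure M" using M by (simp add: prob_space_def)

lemma hint: assumes h: "h \<in> space \<pi>" shows "integrable M h"
  by (rule bnd_integrable[OF MF hsecM[OF h], where B=b]) (use hbnd[OF h] in force)

lemma Eh_bnd: assumes h: "h \<in> space \<pi>" shows "0 \<le> (\<integral>y. h y \<partial>M) \<and> (\<integral>y. h y \<partial>M) \<le> b"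
proof
  show "0 \<le> (\<integral>y. h y \<partial>M)" by (rule Bochner_Integration.integral_nonneg) (use hbnd[OF h] in blast)
  have "(\<integral>y. h y \<partial>M) \<le> (\<integral>y. b \<partial>M)"
    by (rule integral_mono[OF hint[OF h] finite_measure.integrable_const[OF MF]]) (use hbnd[OF h] in blast)
  then show "(\<integral>y. h y \<partial>M) \<le> b" using prob_space.prob_space[OF M] by simp
qed

lemma gap_bnd: assumes h: "h \<in> space \<pi>" and x: "x \<in> space S"
  shows "\<bar>gen_gap M n h x\<bar> \<le> b"
proof -
  have s0: "0 \<le> (\<Sum>i<n. h (x i))" using hbnd[OF h] x_comp[OF x] by (intro sum_nonneg) blast
  have s1: "(\<Sum>i<n. h (x i)) \<le> real (card {..<n}) * b"
    using hbnd[OF h] x_comp[OF x] by (intro sum_bounded_above) blast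
  have a0: "0 \<le> (\<Sum>i<n. h (x i)) / real n" using s0 by simp
  have a1: "(\<Sum>i<n. h (x i)) / real n \<le> b" using s1 npos by (simp add: divide_le_eq mult.commute)
  show ?thesis using Eh_bnd[OF h] a0 a1 unfolding gen_gap_def by linarith
qed

lemma sum_upd: fixes h :: "'x \<Rightarrow> real" assumes k: "k < n"
  shows "(\<Sum>i<n. h ((x(k:=y)) i)) = (\<Sum>i<n. h (x i)) - h (x k) + h y"
proof -
  have e1: "(\<Sum>i<n. h ((x(k:=y)) i)) = h y + (\<Sum>i\<in>{..<n} - {k}. h ((x(k:=y)) i))"
    using k by (subst sum.remove[of _ k]) auto
  have e2: "(\<Sum>i\<in>{..<n} - {k}. h ((x(k:=y)) i)) = (\<Sum>i\<in>{..<n} - {k}. h (x i))"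
    by (intro sum.cong) auto
  have e3: "(\<Sum>i<n. h (x i)) = h (x k) + (\<Sum>i\<in>{..<n} - {k}. h (x i))"
    using k by (subst sum.remove[of _ k]) auto
  show ?thesis unfolding e1 e2 e3 by (simp add: algebra_simps)
qed

lemma gap_diff:
  assumes k: "k < n" and h: "h \<in> space \<pi>" and x: "x \<in> space S" and y: "y \<in> space M" and y': "y' \<in> space M"
  shows "gen_gap M n h (x(k:=y)) - gen_gap M n h (x(k:=y')) \<le> b / real n"
proof -
  have "gen_gap M n h (x(k:=y)) - gen_gap M n h (x(k:=y')) = (h y' - h y) / real n"
    unfolding gen_gap_def sum_upd[OF k] by (simp add: diff_divide_distrib add_divide_distrib)
  also have "\<dots> \<le> b / real n"
    using hbnd[OF h y] hbnd[OF h y'] npos by (intro divide_right_mono) auto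
  finally show ?thesis .
qed

lemma comp_meas: "i < n \<Longrightarrow> (\<lambda>x. x i) \<in> measurable S M"
  unfolding S_eq by (rule measurable_component_singleton) simp

lemma Eh_m: "(\<lambda>h. \<integral>y. h y \<partial>M) \<in> borel_measurable \<pi>"
  using sigma_finite_measure.borel_measurable_lebesgue_integral[OF prob_space_imp_sigma_finite[OF M], of "\<lambda>h y. h y" \<pi>] hm
  by simp

lemma comp_m: assumes i: "i < n" shows "(\<lambda>(h, x). h (x i)) \<in> borel_measurable (\<pi> \<Otimes>\<^sub>M S)"
proof -
  have "(\<lambda>p. (fst p, snd p i)) \<in> measurable (\<pi> \<Otimes>\<^sub>M S) (\<pi> \<Otimes>\<^sub>M M)"
    by (intro measurable_Pair measurable_fst measurable_comp[OF measurable_snd comp_meas[OF i], unfolded comp_def])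
  from measurable_comp[OF this hm] show ?thesis by (simp add: comp_def split_beta')
qed

lemma sum_m: "(\<lambda>(h, x). \<Sum>i<n. h (x i)) \<in> borel_measurable (\<pi> \<Otimes>\<^sub>M S)"
proof -
  have "(\<lambda>p. \<Sum>i<n. (\<lambda>(h, x). h (x i)) p) \<in> borel_measurable (\<pi> \<Otimes>\<^sub>M S)"
    by (rule borel_measurable_sum) (simp add: comp_m)
  then show ?thesis by (simp add: split_beta')
qed

lemma gapm: "(\<lambda>(h, x). gen_gap M n h x) \<in> borel_measurable (\<pi> \<Otimes>\<^sub>M S)"
proof -
  have e: "(\<lambda>p. \<integral>y. fst p y \<partial>M) \<in> borel_measurable (\<pi> \<Otimes>\<^sub>M S)"
    using measurable_comp[OF measurable_fst Eh_m] by (simp add: comp_def)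
  have s: "(\<lambda>p. \<Sum>i<n. fst p (snd p i)) \<in> borel_measurable (\<pi> \<Otimes>\<^sub>M S)"
    using sum_m by (simp add: split_beta')
  have "(\<lambda>p. (\<integral>y. fst p y \<partial>M) - (\<Sum>i<n. fst p (snd p i)) / real n) \<in> borel_measurable (\<pi> \<Otimes>\<^sub>M S)"
    using e s by measurable
  then show ?thesis unfolding gen_gap_def by (simp add: split_beta')
qed

lemma gapsec: assumes x: "x \<in> space S" shows "(\<lambda>h. gen_gap M n h x) \<in> borel_measurable \<pi>"
  using measurable_comp[OF measurable_Pair2'[OF x] gapm] by (simp add: comp_def)

lemma gapsec2: assumes h: "h \<in> space \<pi>" shows "(\<lambda>x. gen_gap M n h x) \<in> borel_measurable S"
  using measurable_Pair2[OF gapm h] by simp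

lemma S_F: "finite_measure S" using S_ps by (simp add: prob_space_def)

lemma E_gap: assumes h: "h \<in> space \<pi>" shows "(\<integral>x. gen_gap M n h x \<partial>S) = 0"
proof -
  have cI: "integrable S (\<lambda>x. h (x i))" if i: "i < n" for i
    by (rule bnd_integrable[OF S_F measurable_comp[OF comp_meas[OF i] hsecM[OF h], unfolded comp_def], where B=b])
       (use hbnd[OF h] x_comp i in force)
  have cE: "(\<integral>x. h (x i) \<partial>S) = (\<integral>y. h y \<partial>M)" if i: "i < n" for i
  proof -
    have "distr S M (\<lambda>x. x i) = M" using distr_PiM_component[of "{..<n}" "\<lambda>_. M" i] M i by (simp add: S_eq)
    then have "(\<integral>y. h y \<partial>M) = (\<integral>y. h y \<partial>distr S M (\<lambda>x. x i))" by simp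
    also have "\<dots> = (\<integral>x. h (x i) \<partial>S)" by (rule integral_distr[OF comp_meas[OF i] hsecM[OF h]])
    finally show ?thesis by simp
  qed
  have sI: "integrable S (\<lambda>x. (\<Sum>i<n. h (x i)) / real n)"
    using cI by (intro integrable_divide integrable_sum) auto
  have "(\<integral>x. gen_gap M n h x \<partial>S) = (\<integral>x. (\<integral>y. h y \<partial>M) \<partial>S) - (\<integral>x. (\<Sum>i<n. h (x i)) / real n \<partial>S)"
    unfolding gen_gap_def by (rule Bochner_Integration.integral_diff[OF finite_measure.integrable_const[OF S_F] sI])
  also have "(\<integral>x. (\<Sum>i<n. h (x i)) / real n \<partial>S) = (\<Sum>i<n. \<integral>x. h (x i) \<partial>S) / real n"
    by (simp add: integral_sum cI)
  also have "\<dots> = (\<integral>y. h y \<partial>M)" using cE npos by simp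
  finally show ?thesis using prob_space.prob_space[OF S_ps] by simp
qed

end



context setting begin

lemma psi_facts:
  assumes h: "h \<in> space \<pi>" and l: "0 \<le> l"
  shows "psi \<pi> S H (\<lambda>h x. l * gen_gap M n h x) h \<le> real n / 8 * (l * b / real n + 2 * c)\<^sup>2"
    and "0 \<le> psi \<pi> S H (\<lambda>h x. l * gen_gap M n h x) h"
    and "(\<integral>x. exp (l * gen_gap M n h x + HQ h x) \<partial>S)
          = exp (\<integral>x. HQ h x \<partial>S) * exp (psi \<pi> S H (\<lambda>h x. l * gen_gap M n h x) h)"
    and "exp (\<integral>x. HQ h x \<partial>S) \<le> (\<integral>x. exp (HQ h x) \<partial>S)"
proof -
  obtain B where B: "\<forall>x\<in>space S. \<bar>HQ h x\<bar> \<le> B" using HQ_bnd[OF h] by blast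
  define G where "G x = l * gen_gap M n h x + HQ h x" for x
  define d where "d = l * b / real n + 2 * c"
  note gm = gapsec2[OF h] and qm = HQsec2[OF h]
  have Gm: "G \<in> borel_measurable S" unfolding G_def using gm qm by measurable
  have Gb: "\<bar>G x\<bar> \<le> l * b + B" if x: "x \<in> space S" for x
  proof -
    have "\<bar>l * gen_gap M n h x\<bar> \<le> l * b"
      using gap_bnd[OF h x] l by (simp add: abs_mult mult_left_mono)
    then show ?thesis using B x unfolding G_def by force
  qed
  have Gd: "\<forall>k\<in>{..<n}. \<forall>x\<in>space (PiM {..<n} (\<lambda>_. M)). \<forall>y\<in>space M. \<forall>y'\<in>space M.
      G (x(k:=y)) - G (x(k:=y')) \<le> d"
  proof (intro ballI)
    fix k x y y' assume k: "k \<in> {..<n}" and x: "x \<in> space (PiM {..<n} (\<lambda>_. M))"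
      and y: "y \<in> space M" and y': "y' \<in> space M"
    have k': "k < n" using k by simp
    have x': "x \<in> space S" using x by (simp add: S_eq)
    have "l * (gen_gap M n h (x(k:=y)) - gen_gap M n h (x(k:=y'))) \<le> l * (b / real n)"
      using gap_diff[OF k' h x' y y'] l by (rule mult_left_mono)
    moreover have "HQ h (x(k:=y)) - HQ h (x(k:=y')) \<le> 2 * c" by (rule HQ_diff[OF k' h x' y y'])
    ultimately show "G (x(k:=y)) - G (x(k:=y')) \<le> d"
      unfolding G_def d_def by (simp add: algebra_simps)
  qed
  have SF: "finite_measure S" by (rule S_F)
  have gI: "integrable S (\<lambda>x. gen_gap M n h x)"
    by (rule bnd_integrable[OF SF gm]) (rule gap_bnd[OF h])
  have qI: "integrable S (\<lambda>x. HQ h x)"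
    by (rule bnd_integrable[OF SF qm]) (use B in blast)
  define m where "m = (\<integral>x. HQ h x \<partial>S)"
  have EG: "(\<integral>x. G x \<partial>S) = m"
  proof -
    have "(\<integral>x. G x \<partial>S) = (\<integral>x. l * gen_gap M n h x \<partial>S) + m"
      unfolding G_def m_def by (rule Bochner_Integration.integral_add[OF integrable_mult_right[OF gI] qI])
    also have "(\<integral>x. l * gen_gap M n h x \<partial>S) = 0" using E_gap[OF h] by simp
    finally show ?thesis by simp
  qed
  define I where "I = (\<integral>x. exp (G x - m) \<partial>S)"
  have psi_eq: "psi \<pi> S H (\<lambda>h x. l * gen_gap M n h x) h = ln I"
    unfolding psi_def I_def G_def m_def by simp
  have mcd: "I \<le> exp (real (card {..<n}) * d\<^sup>2 / 8)"
  proof -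
    have Gm': "G \<in> borel_measurable (PiM {..<n} (\<lambda>_. M))" using Gm by (simp add: S_eq)
    have Gb': "\<forall>x\<in>space (PiM {..<n} (\<lambda>_. M)). \<bar>G x\<bar> \<le> l * b + B" using Gb by (simp add: S_eq)
    have "(\<integral>x. exp (G x - (\<integral>x. G x \<partial>PiM {..<n} (\<lambda>_. M))) \<partial>PiM {..<n} (\<lambda>_. M)) \<le> exp (real (card {..<n}) * d\<^sup>2 / 8)"
      by (rule mcdiarmid[OF M finite_lessThan[of n] Gm' Gb' Gd])
    then show ?thesis unfolding I_def using EG by (simp add: S_eq)
  qed
  have I1: "1 \<le> I"
    unfolding I_def using exp_jensen[OF S_ps Gm Gb] EG by simp
  show "psi \<pi> S H (\<lambda>h x. l * gen_gap M n h x) h \<le> real n / 8 * (l * b / real n + 2 * c)\<^sup>2"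
  proof -
    have "ln I \<le> ln (exp (real (card {..<n}) * d\<^sup>2 / 8))"
      using mcd I1 by (subst ln_le_cancel_iff) auto
    then show ?thesis unfolding psi_eq d_def by simp
  qed
  show "0 \<le> psi \<pi> S H (\<lambda>h x. l * gen_gap M n h x) h" unfolding psi_eq using I1 by simp
  show "(\<integral>x. exp (l * gen_gap M n h x + HQ h x) \<partial>S)
          = exp (\<integral>x. HQ h x \<partial>S) * exp (psi \<pi> S H (\<lambda>h x. l * gen_gap M n h x) h)"
  proof -
    have "(\<integral>x. exp (l * gen_gap M n h x + HQ h x) \<partial>S) = (\<integral>x. exp m * exp (G x - m) \<partial>S)"
      unfolding G_def by (simp flip: exp_add)
    also have "\<dots> = exp m * I" unfolding I_def by simp
    also have "I = exp (ln I)" using I1 by simp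
    finally show ?thesis unfolding psi_eq m_def .
  qed
  show "exp (\<integral>x. HQ h x \<partial>S) \<le> (\<integral>x. exp (HQ h x) \<partial>S)"
  proof -
    have J: "1 \<le> (\<integral>x. exp (HQ h x - m) \<partial>S)"
      unfolding m_def using exp_jensen[OF S_ps qm, of B] B by blast
    have "(\<integral>x. exp (HQ h x) \<partial>S) = (\<integral>x. exp m * exp (HQ h x - m) \<partial>S)"
      by (simp flip: exp_add)
    also have "\<dots> = exp m * (\<integral>x. exp (HQ h x - m) \<partial>S)" by simp
    finally have "(\<integral>x. exp (HQ h x) \<partial>S) = exp m * (\<integral>x. exp (HQ h x - m) \<partial>S)" .
    moreover have "exp m \<le> exp m * (\<integral>x. exp (HQ h x - m) \<partial>S)"
      using J by (simp add: mult_le_cancel_left1)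
    ultimately show ?thesis unfolding m_def by simp
  qed
qed

definition sval where "sval l = (SUP h\<in>space \<pi>. psi \<pi> S H (\<lambda>h x. l * gen_gap M n h x) h)"

lemma sval_facts:
  assumes l: "0 \<le> l"
  shows "\<And>h. h \<in> space \<pi> \<Longrightarrow> psi \<pi> S H (\<lambda>h x. l * gen_gap M n h x) h \<le> sval l"
    and "sval l \<le> real n / 8 * (l * b / real n + 2 * c)\<^sup>2"
    and "0 \<le> sval l"
proof -
  have bdd: "bdd_above ((\<lambda>h. psi \<pi> S H (\<lambda>h x. l * gen_gap M n h x) h) ` space \<pi>)"
    using psi_facts(1)[OF _ l] by (intro bdd_aboveI[where M="real n / 8 * (l * b / real n + 2 * c)\<^sup>2"]) blast
  show le: "psi \<pi> S H (\<lambda>h x. l * gen_gap M n h x) h \<le> sval l" if "h \<in> space \<pi>" for h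
    unfolding sval_def using bdd that by (rule cSUP_upper2) simp
  show "sval l \<le> real n / 8 * (l * b / real n + 2 * c)\<^sup>2"
    unfolding sval_def using pi_ne psi_facts(1)[OF _ l] by (intro cSUP_least) auto
  obtain h where h: "h \<in> space \<pi>" using pi_ne by blast
  show "0 \<le> sval l" using le[OF h] psi_facts(2)[OF h l] by linarith
qed

end



context setting begin

lemma Q_sets: "x \<in> space S \<Longrightarrow> sets (Q x) = sets \<pi>" using Q_props by blast

lemma Q_ps: "x \<in> space S \<Longrightarrow> prob_space (Q x)" using Q_props by blast

lemma gapsecQ: assumes x: "x \<in> space S" shows "(\<lambda>h. gen_gap M n h x) \<in> borel_measurable (Q x)"
  using gapsec[OF x] by (subst measurable_cong_sets[OF Q_sets[OF x] refl])

lemma gapm_sw: "(\<lambda>(x, h). gen_gap M n h x) \<in> borel_measurable (S \<Otimes>\<^sub>M \<pi>)"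
  using measurable_comp[OF measurable_pair_swap'[of S \<pi>] gapm] by (simp add: comp_def split_beta')

lemma HQm_sw: "(\<lambda>(x, h). HQ h x) \<in> borel_measurable (S \<Otimes>\<^sub>M \<pi>)"
  using measurable_comp[OF measurable_pair_swap'[of S \<pi>] HQm] by (simp add: comp_def split_beta')

lemma ennexp: "ennreal (exp u) * ennreal (exp v) = ennreal (exp (v + u))"
  by (subst ennreal_mult[symmetric]) (simp_all add: exp_add mult.commute)

lemma Vx_eq: assumes x: "x \<in> space S"
  shows "(\<integral>h. exp (l * gen_gap M n h x) \<partial>Q x) = enn2real (\<integral>\<^sup>+h. ennreal (exp (l * gen_gap M n h x + HQ h x)) \<partial>\<pi>)"
proof -
  have m: "(\<lambda>h. exp (l * gen_gap M n h x)) \<in> borel_measurable (Q x)" using gapsecQ[OF x] by measurable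
  have "(\<integral>h. exp (l * gen_gap M n h x) \<partial>Q x) = enn2real (\<integral>\<^sup>+h. ennreal (exp (l * gen_gap M n h x)) \<partial>Q x)"
    by (rule integral_eq_nn_integral[OF m]) simp
  also have "(\<integral>\<^sup>+h. ennreal (exp (l * gen_gap M n h x)) \<partial>Q x)
      = (\<integral>\<^sup>+h. ennreal (exp (HQ h x)) * ennreal (exp (l * gen_gap M n h x)) \<partial>\<pi>)"
    unfolding dens_HQ[OF x] by (rule nn_integral_density) (use HQsec[OF x] in measurable, use gapsec[OF x] in measurable)
  also have "\<dots> = (\<integral>\<^sup>+h. ennreal (exp (l * gen_gap M n h x + HQ h x)) \<partial>\<pi>)"
    by (intro nn_integral_cong) (rule ennexp)
  finally show ?thesis .
qed

lemma Vx_nonneg: "0 \<le> (\<integral>h. exp (l * gen_gap M n h x) \<partial>Q x)"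
  by (rule Bochner_Integration.integral_nonneg) simp

lemma Vx_le: assumes x: "x \<in> space S" and l: "0 \<le> l"
  shows "(\<integral>h. exp (l * gen_gap M n h x) \<partial>Q x) \<le> exp (l * b)"
proof -
  interpret Qx: prob_space "Q x" by (rule Q_ps[OF x])
  have bd: "exp (l * gen_gap M n h x) \<le> exp (l * b)" if "h \<in> space (Q x)" for h
  proof -
    have "gen_gap M n h x \<le> b" using gap_bnd[of h x] that x Q_space[OF x] by auto
    then show ?thesis using l by (simp add: mult_left_mono)
  qed
  have "integrable (Q x) (\<lambda>h. exp (l * gen_gap M n h x))"
  proof (rule bnd_integrable[OF Qx.finite_measure_axioms, where B="exp (l * b)"])
    show "(\<lambda>h. exp (l * gen_gap M n h x)) \<in> borel_measurable (Q x)" using gapsecQ[OF x] by measurable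
    fix h assume "h \<in> space (Q x)"
    then show "\<bar>exp (l * gen_gap M n h x)\<bar> \<le> exp (l * b)" using bd by simp
  qed
  then have "(\<integral>h. exp (l * gen_gap M n h x) \<partial>Q x) \<le> (\<integral>h. exp (l * b) \<partial>Q x)"
    by (rule integral_mono[OF _ Qx.integrable_const]) (rule bd)
  then show ?thesis by (simp add: Qx.prob_space)
qed

lemma Vm: "(\<lambda>x. \<integral>h. exp (l * gen_gap M n h x) \<partial>Q x) \<in> borel_measurable S"
proof -
  have m: "(\<lambda>x. enn2real (\<integral>\<^sup>+h. ennreal (exp (l * gen_gap M n h x)) \<partial>Q x)) \<in> borel_measurable S"
  proof (rule borel_measurable_enn2real)
    have "(\<lambda>(x, h). ennreal (exp (l * gen_gap M n h x))) \<in> borel_measurable (S \<Otimes>\<^sub>M \<pi>)"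
      using gapm_sw by measurable
    from nn_integral_measurable_subprob_algebra2[OF this Qm]
    show "(\<lambda>x. \<integral>\<^sup>+h. ennreal (exp (l * gen_gap M n h x)) \<partial>Q x) \<in> borel_measurable S" by simp
  qed
  have eq: "enn2real (\<integral>\<^sup>+h. ennreal (exp (l * gen_gap M n h x)) \<partial>Q x) = (\<integral>h. exp (l * gen_gap M n h x) \<partial>Q x)"
    if x: "x \<in> space S" for x
  proof (rule integral_eq_nn_integral[symmetric])
    show "(\<lambda>h. exp (l * gen_gap M n h x)) \<in> borel_measurable (Q x)" using gapsecQ[OF x] by measurable
  qed simp
  show ?thesis
    using measurable_cong[of S "\<lambda>x. enn2real (\<integral>\<^sup>+h. ennreal (exp (l * gen_gap M n h x)) \<partial>Q x)"
        "\<lambda>x. \<integral>h. exp (l * gen_gap M n h x) \<partial>Q x" borel, OF eq] m by blast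
qed

lemma VI: assumes l: "0 \<le> l" shows "integrable S (\<lambda>x. \<integral>h. exp (l * gen_gap M n h x) \<partial>Q x)"
proof (rule bnd_integrable[OF S_F Vm, where B="exp (l * b)"])
  fix x assume x: "x \<in> space S"
  show "\<bar>\<integral>h. exp (l * gen_gap M n h x) \<partial>Q x\<bar> \<le> exp (l * b)"
    using Vx_le[OF x l] Vx_nonneg[where l=l and x=x] by simp
qed

lemma expI1: assumes h: "h \<in> space \<pi>" shows "integrable S (\<lambda>x. exp (l * gen_gap M n h x + HQ h x))"
proof -
  obtain B where B: "\<forall>x\<in>space S. \<bar>HQ h x\<bar> \<le> B" using HQ_bnd[OF h] by blast
  show ?thesis
  proof (rule bnd_integrable[OF S_F, where B="exp (\<bar>l\<bar> * b + B)"])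
    show "(\<lambda>x. exp (l * gen_gap M n h x + HQ h x)) \<in> borel_measurable S"
      using gapsec2[OF h] HQsec2[OF h] by measurable
    fix x assume x: "x \<in> space S"
    have "\<bar>l * gen_gap M n h x\<bar> \<le> \<bar>l\<bar> * b" using gap_bnd[OF h x] by (simp add: abs_mult mult_left_mono)
    then have "l * gen_gap M n h x + HQ h x \<le> \<bar>l\<bar> * b + B" using B x by force
    then show "\<bar>exp (l * gen_gap M n h x + HQ h x)\<bar> \<le> exp (\<bar>l\<bar> * b + B)" by simp
  qed
qed

lemma V_le: assumes l: "0 \<le> l"
  shows "(\<integral>x. (\<integral>h. exp (l * gen_gap M n h x) \<partial>Q x) \<partial>S) \<le> exp (sval l)"
proof -
  interpret PS: pair_sigma_finite \<pi> S
    by (rule pair_sigma_finite.intro[OF pi_sf prob_space_imp_sigma_finite[OF S_ps]])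
  define s where "s = sval l"
  have Km: "(\<lambda>(h, x). ennreal (exp (l * gen_gap M n h x + HQ h x))) \<in> borel_measurable (\<pi> \<Otimes>\<^sub>M S)"
    using gapm HQm by measurable
  have K2m: "(\<lambda>(h, x). ennreal (exp (HQ h x))) \<in> borel_measurable (\<pi> \<Otimes>\<^sub>M S)"
    using HQm by measurable
  have "ennreal (\<integral>x. (\<integral>h. exp (l * gen_gap M n h x) \<partial>Q x) \<partial>S)
      = (\<integral>\<^sup>+x. ennreal (\<integral>h. exp (l * gen_gap M n h x) \<partial>Q x) \<partial>S)"
    by (rule nn_integral_eq_integral[OF VI[OF l], symmetric]) (simp add: Vx_nonneg)
  also have "\<dots> \<le> (\<integral>\<^sup>+x. (\<integral>\<^sup>+h. ennreal (exp (l * gen_gap M n h x + HQ h x)) \<partial>\<pi>) \<partial>S)"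
  proof (rule nn_integral_mono)
    fix x assume x: "x \<in> space S"
    show "ennreal (\<integral>h. exp (l * gen_gap M n h x) \<partial>Q x) \<le> (\<integral>\<^sup>+h. ennreal (exp (l * gen_gap M n h x + HQ h x)) \<partial>\<pi>)"
      unfolding Vx_eq[OF x] by (simp add: ennreal_enn2real_if)
  qed
  also have "\<dots> = (\<integral>\<^sup>+h. (\<integral>\<^sup>+x. ennreal (exp (l * gen_gap M n h x + HQ h x)) \<partial>S) \<partial>\<pi>)"
    by (rule PS.Fubini'[OF Km])
  also have "\<dots> \<le> (\<integral>\<^sup>+h. ennreal (exp s) * (\<integral>\<^sup>+x. ennreal (exp (HQ h x)) \<partial>S) \<partial>\<pi>)"
  proof (rule nn_integral_mono)
    fix h assume h: "h \<in> space \<pi>"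
    obtain B where B: "\<forall>x\<in>space S. \<bar>HQ h x\<bar> \<le> B" using HQ_bnd[OF h] by blast
    have qI: "integrable S (\<lambda>x. exp (HQ h x))"
    proof (rule bnd_integrable[OF S_F, where B="exp B"])
      show "(\<lambda>x. exp (HQ h x)) \<in> borel_measurable S" using HQsec2[OF h] by measurable
      fix x assume "x \<in> space S"
      then have "\<bar>HQ h x\<bar> \<le> B" using B by blast
      then show "\<bar>exp (HQ h x)\<bar> \<le> exp B" by simp
    qed
    have "(\<integral>\<^sup>+x. ennreal (exp (l * gen_gap M n h x + HQ h x)) \<partial>S) = ennreal (\<integral>x. exp (l * gen_gap M n h x + HQ h x) \<partial>S)"
      by (rule nn_integral_eq_integral[OF expI1[OF h]]) simp
    also have "\<dots> = ennreal (exp (\<integral>x. HQ h x \<partial>S) * exp (psi \<pi> S H (\<lambda>h x. l * gen_gap M n h x) h))"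
      using psi_facts(3)[OF h l] by simp
    also have "\<dots> \<le> ennreal ((\<integral>x. exp (HQ h x) \<partial>S) * exp s)"
    proof (intro ennreal_leI mult_mono)
      show "exp (\<integral>x. HQ h x \<partial>S) \<le> (\<integral>x. exp (HQ h x) \<partial>S)" by (rule psi_facts(4)[OF h l])
      show "exp (psi \<pi> S H (\<lambda>h x. l * gen_gap M n h x) h) \<le> exp s"
        unfolding s_def using sval_facts(1)[OF l h] by simp
      show "0 \<le> (\<integral>x. exp (HQ h x) \<partial>S)" by (rule Bochner_Integration.integral_nonneg) simp
    qed simp
    also have "\<dots> = ennreal (exp s) * ennreal (\<integral>x. exp (HQ h x) \<partial>S)"
      by (simp add: ennreal_mult mult.commute)
    also have "ennreal (\<integral>x. exp (HQ h x) \<partial>S) = (\<integral>\<^sup>+x. ennreal (exp (HQ h x)) \<partial>S)"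
      by (rule nn_integral_eq_integral[OF qI, symmetric]) simp
    finally show "(\<integral>\<^sup>+x. ennreal (exp (l * gen_gap M n h x + HQ h x)) \<partial>S) \<le> ennreal (exp s) * (\<integral>\<^sup>+x. ennreal (exp (HQ h x)) \<partial>S)" .
  qed
  also have "\<dots> = ennreal (exp s) * (\<integral>\<^sup>+h. (\<integral>\<^sup>+x. ennreal (exp (HQ h x)) \<partial>S) \<partial>\<pi>)"
    by (rule nn_integral_cmult) (use K2m in measurable)
  also have "(\<integral>\<^sup>+h. (\<integral>\<^sup>+x. ennreal (exp (HQ h x)) \<partial>S) \<partial>\<pi>) = (\<integral>\<^sup>+x. (\<integral>\<^sup>+h. ennreal (exp (HQ h x)) \<partial>\<pi>) \<partial>S)"
    by (rule PS.Fubini'[OF K2m, symmetric])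
  also have "\<dots> = (\<integral>\<^sup>+x. 1 \<partial>S)"
    by (rule nn_integral_cong) (rule int_HQ)
  also have "\<dots> = 1" using prob_space.emeasure_space_1[OF S_ps] by simp
  finally have "ennreal (\<integral>x. (\<integral>h. exp (l * gen_gap M n h x) \<partial>Q x) \<partial>S) \<le> ennreal (exp s)" by simp
  then show ?thesis unfolding s_def by (simp add: ennreal_le_iff)
qed

lemma part1: assumes l: "0 \<le> l"
  shows "ln (\<integral>x. (\<integral>h. exp (l * gen_gap M n h x) \<partial>Q x) \<partial>S) \<le> sval l"
proof -
  define V where "V = (\<integral>x. (\<integral>h. exp (l * gen_gap M n h x) \<partial>Q x) \<partial>S)"
  have V0: "0 \<le> V" unfolding V_def by (rule Bochner_Integration.integral_nonneg) (rule Vx_nonneg)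
  have V1: "V \<le> exp (sval l)" unfolding V_def by (rule V_le[OF l])
  show ?thesis
  proof (cases "V = 0")
    case True then show ?thesis using sval_facts(3)[OF l] unfolding V_def by simp
  next
    case False
    then have "0 < V" using V0 by simp
    then have "ln V \<le> ln (exp (sval l))" using V1 by (subst ln_le_cancel_iff) auto
    then show ?thesis unfolding V_def by simp
  qed
qed

end



context setting begin

lemma Aset: assumes x: "x \<in> space S"
  shows "{h \<in> space \<pi>. gen_gap M n h x \<le> t} \<in> sets (Q x)"
proof -
  have "{h \<in> space \<pi>. gen_gap M n h x \<le> t} \<in> sets \<pi>" using gapsec[OF x] by measurable
  then show ?thesis using Q_sets[OF x] by simp
qed

lemma Px_lower: assumes x: "x \<in> space S" and l: "0 \<le> l"
  shows "1 - exp (- (l * t)) * (\<integral>h. exp (l * gen_gap M n h x) \<partial>Q x)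
     \<le> measure (Q x) {h \<in> space \<pi>. gen_gap M n h x \<le> t}"
proof -
  interpret Qx: prob_space "Q x" by (rule Q_ps[OF x])
  define A where "A = {h \<in> space \<pi>. gen_gap M n h x \<le> t}"
  have A: "A \<in> sets (Q x)" unfolding A_def by (rule Aset[OF x])
  have eI: "integrable (Q x) (\<lambda>h. exp (l * gen_gap M n h x))"
  proof (rule bnd_integrable[OF Qx.finite_measure_axioms, where B="exp (l * b)"])
    show "(\<lambda>h. exp (l * gen_gap M n h x)) \<in> borel_measurable (Q x)" using gapsecQ[OF x] by measurable
    fix h assume "h \<in> space (Q x)"
    then have "gen_gap M n h x \<le> b" using gap_bnd[of h x] x Q_space[OF x] by auto
    then show "\<bar>exp (l * gen_gap M n h x)\<bar> \<le> exp (l * b)" using l by (simp add: mult_left_mono)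
  qed
  have fI: "integrable (Q x) (\<lambda>h. 1 - exp (- (l * t)) * exp (l * gen_gap M n h x))"
    by (rule Bochner_Integration.integrable_diff[OF Qx.integrable_const integrable_mult_right[OF eI]])
  have iI: "integrable (Q x) (indicator A :: _ \<Rightarrow> real)"
    using A by (intro integrable_real_indicator) (simp_all add: Qx.emeasure_finite less_top[symmetric])
  have "(\<integral>h. 1 - exp (- (l * t)) * exp (l * gen_gap M n h x) \<partial>Q x) \<le> (\<integral>h. indicator A h \<partial>Q x)"
  proof (rule integral_mono[OF fI iI])
    fix h assume h: "h \<in> space (Q x)"
    show "1 - exp (- (l * t)) * exp (l * gen_gap M n h x) \<le> indicator A h"
    proof (cases "gen_gap M n h x \<le> t")
      case True
      then show ?thesis using h Q_space[OF x] by (simp add: A_def)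
    next
      case False
      then have "l * t \<le> l * gen_gap M n h x" using l by (simp add: mult_left_mono)
      then have "1 \<le> exp (- (l * t)) * exp (l * gen_gap M n h x)" by (simp flip: exp_add)
      then show ?thesis using False by (simp add: A_def)
    qed
  qed
  also have "(\<integral>h. indicator A h \<partial>Q x) = measure (Q x) A"
    using A sets.sets_into_space[OF A] by (simp add: Int_absorb2)
  also have "(\<integral>h. 1 - exp (- (l * t)) * exp (l * gen_gap M n h x) \<partial>Q x)
      = 1 - exp (- (l * t)) * (\<integral>h. exp (l * gen_gap M n h x) \<partial>Q x)"
    using Bochner_Integration.integral_diff[OF Qx.integrable_const integrable_mult_right[OF eI]]
    by (simp add: Qx.prob_space)
  finally show ?thesis unfolding A_def .
qed

lemma Pm: "(\<lambda>x. measure (Q x) {h \<in> space \<pi>. gen_gap M n h x \<le> t}) \<in> borel_measurable S"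
proof -
  have f: "(\<lambda>(x, h). ennreal (if gen_gap M n h x \<le> t then 1 else 0)) \<in> borel_measurable (S \<Otimes>\<^sub>M \<pi>)"
    using gapm_sw by measurable
  have m: "(\<lambda>x. enn2real (\<integral>\<^sup>+h. ennreal (if gen_gap M n h x \<le> t then 1 else 0) \<partial>Q x)) \<in> borel_measurable S"
    using nn_integral_measurable_subprob_algebra2[OF f Qm] by (rule borel_measurable_enn2real)
  have eq: "enn2real (\<integral>\<^sup>+h. ennreal (if gen_gap M n h x \<le> t then 1 else 0) \<partial>Q x)
      = measure (Q x) {h \<in> space \<pi>. gen_gap M n h x \<le> t}" if x: "x \<in> space S" for x
  proof -
    have "(\<integral>\<^sup>+h. ennreal (if gen_gap M n h x \<le> t then 1 else 0) \<partial>Q x)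
        = (\<integral>\<^sup>+h. indicator {h \<in> space \<pi>. gen_gap M n h x \<le> t} h \<partial>Q x)"
      using Q_space[OF x] by (intro nn_integral_cong) (simp add: indicator_def)
    also have "\<dots> = emeasure (Q x) {h \<in> space \<pi>. gen_gap M n h x \<le> t}"
      by (rule nn_integral_indicator[OF Aset[OF x]])
    finally show ?thesis by (simp add: measure_def)
  qed
  show ?thesis
    using measurable_cong[of S "\<lambda>x. enn2real (\<integral>\<^sup>+h. ennreal (if gen_gap M n h x \<le> t then 1 else 0) \<partial>Q x)"
        "\<lambda>x. measure (Q x) {h \<in> space \<pi>. gen_gap M n h x \<le> t}" borel, OF eq] m by blast
qed

lemma P_int: assumes l: "0 \<le> l"
  shows "1 - exp (- (l * t)) * (\<integral>x. (\<integral>h. exp (l * gen_gap M n h x) \<partial>Q x) \<partial>S)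
    \<le> (\<integral>x. measure (Q x) {h \<in> space \<pi>. gen_gap M n h x \<le> t} \<partial>S)"
proof -
  interpret SP: prob_space S by (rule S_ps)
  have PI: "integrable S (\<lambda>x. measure (Q x) {h \<in> space \<pi>. gen_gap M n h x \<le> t})"
  proof (rule bnd_integrable[OF S_F Pm, where B=1])
    fix x assume x: "x \<in> space S"
    interpret Qx: prob_space "Q x" by (rule Q_ps[OF x])
    show "\<bar>measure (Q x) {h \<in> space \<pi>. gen_gap M n h x \<le> t}\<bar> \<le> 1" by simp
  qed
  have fI: "integrable S (\<lambda>x. 1 - exp (- (l * t)) * (\<integral>h. exp (l * gen_gap M n h x) \<partial>Q x))"
    by (rule Bochner_Integration.integrable_diff[OF SP.integrable_const integrable_mult_right[OF VI[OF l]]])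
  have "(\<integral>x. 1 - exp (- (l * t)) * (\<integral>h. exp (l * gen_gap M n h x) \<partial>Q x) \<partial>S)
      \<le> (\<integral>x. measure (Q x) {h \<in> space \<pi>. gen_gap M n h x \<le> t} \<partial>S)"
    by (rule integral_mono[OF fI PI]) (rule Px_lower[OF _ l])
  moreover have "(\<integral>x. 1 - exp (- (l * t)) * (\<integral>h. exp (l * gen_gap M n h x) \<partial>Q x) \<partial>S)
      = 1 - exp (- (l * t)) * (\<integral>x. (\<integral>h. exp (l * gen_gap M n h x) \<partial>Q x) \<partial>S)"
    using Bochner_Integration.integral_diff[OF SP.integrable_const integrable_mult_right[OF VI[OF l]]]
    by (simp add: SP.prob_space)
  ultimately show ?thesis by simp
qed

lemma part2: assumes d: "0 < \<delta>"
  shows "1 - \<delta> \<le> (\<integral>x. measure (Q x) {h \<in> space \<pi>.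
                 gen_gap M n h x \<le> b * (c + sqrt (ln (1 / \<delta>) / (2 * real n)))} \<partial>S)"
proof -
  define t where "t = b * (c + sqrt (ln (1 / \<delta>) / (2 * real n)))"
  interpret SP: prob_space S by (rule S_ps)
  have nn: "0 \<le> (\<integral>x. measure (Q x) {h \<in> space \<pi>. gen_gap M n h x \<le> t} \<partial>S)"
    by (rule Bochner_Integration.integral_nonneg) simp
  have "1 - \<delta> \<le> (\<integral>x. measure (Q x) {h \<in> space \<pi>. gen_gap M n h x \<le> t} \<partial>S)"
  proof (cases "1 \<le> \<delta>")
    case True then show ?thesis using nn by linarith
  next
    case False
    then have d1: "\<delta> < 1" by simp
    show ?thesis
    proof (cases "b = 0")
      case True
      have "measure (Q x) {h \<in> space \<pi>. gen_gap M n h x \<le> t} = 1" if x: "x \<in> space S" for x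
      proof -
        have "{h \<in> space \<pi>. gen_gap M n h x \<le> t} = space (Q x)"
          using gap_bnd[OF _ x] True Q_space[OF x] unfolding t_def by fastforce
        then show ?thesis using prob_space.prob_space[OF Q_ps[OF x]] by simp
      qed
      then have "(\<integral>x. measure (Q x) {h \<in> space \<pi>. gen_gap M n h x \<le> t} \<partial>S) = (\<integral>x. 1 \<partial>S)"
        by (intro Bochner_Integration.integral_cong) auto
      then show ?thesis using d SP.prob_space by simp
    next
      case False
      have bpos: "0 < b" using False b_nonneg by simp
      define L where "L = ln (1 / \<delta>)"
      have Lpos: "0 < L" unfolding L_def using d d1 by simp
      define r where "r = sqrt (L / (2 * real n))"
      have rpos: "0 < r" unfolding r_def using Lpos npos by simp
      have r2: "2 * real n * r\<^sup>2 = L" unfolding r_def using Lpos npos by simp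
      define l where "l = (2 * real n * c + 4 * real n * r) / b"
      have lb: "l * b = real n * (2 * c + 4 * r)" unfolding l_def using bpos by (simp add: field_simps)
      have lpos: "0 < l" unfolding l_def using bpos rpos c_nonneg npos
        by (intro divide_pos_pos) (auto intro!: add_nonneg_pos)
      have tt: "t = b * (c + r)" unfolding t_def r_def L_def ..
      have key: "real n / 8 * (l * b / real n + 2 * c)\<^sup>2 - l * t = - L - 2 * real n * r * c"
      proof -
        have "l * b / real n = 2 * c + 4 * r" using lb npos by (simp add: field_simps)
        then have "real n / 8 * (l * b / real n + 2 * c)\<^sup>2 = 2 * real n * (c + r)\<^sup>2"
          by (simp add: power2_eq_square algebra_simps)
        moreover have "l * t = real n * (2 * c + 4 * r) * (c + r)" unfolding tt
          using lb by (metis mult.assoc)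
        ultimately show ?thesis using r2 by (simp add: power2_eq_square algebra_simps)
      qed
      have lnd: "ln \<delta> = - L" unfolding L_def using d by (simp add: ln_div)
      define V where "V = (\<integral>x. (\<integral>h. exp (l * gen_gap M n h x) \<partial>Q x) \<partial>S)"
      have V1: "V \<le> exp (real n / 8 * (l * b / real n + 2 * c)\<^sup>2)"
        unfolding V_def using V_le[of l] sval_facts(2)[of l] lpos by (meson exp_le_cancel_iff less_imp_le order_trans)
      have "exp (- (l * t)) * V \<le> exp (- (l * t)) * exp (real n / 8 * (l * b / real n + 2 * c)\<^sup>2)"
        using V1 by simp
      also have "\<dots> = exp (real n / 8 * (l * b / real n + 2 * c)\<^sup>2 - l * t)" by (simp flip: exp_add)
      also have "\<dots> \<le> exp (ln \<delta>)" unfolding key lnd using rpos c_nonneg npos by simp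
      also have "\<dots> = \<delta>" using d by simp
      finally have "1 - \<delta> \<le> 1 - exp (- (l * t)) * V" by simp
      also have "\<dots> \<le> (\<integral>x. measure (Q x) {h \<in> space \<pi>. gen_gap M n h x \<le> t} \<partial>S)"
        unfolding V_def by (rule P_int) (use lpos in simp)
      finally show ?thesis .
    qed
  qed
  then show ?thesis unfolding t_def .
qed

end

theorem theorem4:
  fixes M :: "'x measure" and \<pi> :: "('x \<Rightarrow> real) measure"
    and Q :: "(nat \<Rightarrow> 'x) \<Rightarrow> ('x \<Rightarrow> real) measure"
    and H :: "('x \<Rightarrow> real) \<Rightarrow> (nat \<Rightarrow> 'x) \<Rightarrow> real"
    and n :: nat and b c :: real
  assumes "prob_space M"
    and "n > 0"
    and "(\<lambda>(h, y). h y) \<in> borel_measurable (\<pi> \<Otimes>\<^sub>M M)"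
    and "abs_cont_algorithm \<pi> (sample_space n M) Q"
    and "is_hamiltonian \<pi> (sample_space n M) Q H"
    and "\<forall>k<n. \<forall>h\<in>space \<pi>. \<forall>y\<in>space M. \<forall>y'\<in>space M. \<forall>x\<in>space (sample_space n M).
           diff_op k y y' H h x \<le> c"
    and "\<forall>h\<in>space \<pi>. \<forall>y\<in>space M. 0 \<le> h y \<and> h y \<le> b"
  shows "(\<forall>l>0.
            ln (\<integral>x. (\<integral>h. exp (l * gen_gap M n h x) \<partial>Q x) \<partial>sample_space n M)
              \<le> (SUP h\<in>space \<pi>. psi \<pi> (sample_space n M) H (\<lambda>h x. l * gen_gap M n h x) h)
          \<and> (SUP h\<in>space \<pi>. psi \<pi> (sample_space n M) H (\<lambda>h x. l * gen_gap M n h x) h)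
              \<le> real n / 8 * (l * b / real n + 2 * c)\<^sup>2)
       \<and> (\<forall>\<delta>>0.
            (\<integral>x. measure (Q x) {h \<in> space \<pi>.
                 gen_gap M n h x \<le> b * (c + sqrt (ln (1 / \<delta>) / (2 * real n)))} \<partial>sample_space n M)
              \<ge> 1 - \<delta>)"
proof -
  interpret st: setting M \<pi> Q H n b c by (rule setting.intro[OF assms])
  show ?thesis
  proof (intro conjI allI impI)
    fix l :: real assume l: "l > 0"
    show "ln (\<integral>x. (\<integral>h. exp (l * gen_gap M n h x) \<partial>Q x) \<partial>sample_space n M)
              \<le> (SUP h\<in>space \<pi>. psi \<pi> (sample_space n M) H (\<lambda>h x. l * gen_gap M n h x) h)"
      using st.part1[of l] l unfolding st.sval_def by simp
  next
    fix l :: real assume l: "l > 0"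
    show "(SUP h\<in>space \<pi>. psi \<pi> (sample_space n M) H (\<lambda>h x. l * gen_gap M n h x) h)
              \<le> real n / 8 * (l * b / real n + 2 * c)\<^sup>2"
      using st.sval_facts(2)[of l] l unfolding st.sval_def by simp
  next
    fix \<delta> :: real assume d: "\<delta> > 0"
    show "(\<integral>x. measure (Q x) {h \<in> space \<pi>.
                 gen_gap M n h x \<le> b * (c + sqrt (ln (1 / \<delta>) / (2 * real n)))} \<partial>sample_space n M)
              \<ge> 1 - \<delta>"
      using st.part2[OF d] by simp
  qed
qed



end
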